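(* Let $n=5$, fix pairwise distinct $i,j,k\in\{1,2,3\}$, and let $\boldsymbol{D}$ satisfy conditions (i)–(x) of the scheme (with offsets chosen according to (A1)–(A8) and satisfying all separability conditions except the two exempted collisions). If receiver $\mathrm{Rx}_i$ sends the decoded message $W_{ij}$ to $\mathrm{Rx}_j$ over the receiver backhaul, so that $\mathrm{Rx}_j$ cancels $W_{ij}$ from the aligned sum $W_{ij}+W_{jk}$ and decodes $W_{jk}$, and then $\mathrm{Rx}_j$ sends $W_{jk}$ to $\mathrm{Rx}_k$, so that $\mathrm{Rx}_k$ cancels it from the aligned sum $W_{jk}+W_{ki}$ and decodes $W_{ki}$, then all $9$ messages are decoded by their intended receivers, i.e. $\frac{9}{5}$ degrees of freedom are achieved with receiver-backhaul sum-rate $\Theta_{\mathrm{R}}=2$. Moreover, with $n=5$, Cyclic Interference Alignment and Cancellation (all $9$ messages sent over the channel) cannot achieve $\frac{9}{5}$ degrees of freedom with $\Theta_{\mathrm{R}}\le 1$; hence $\Theta_{\mathrm{R}}\ge 2$ is necessary.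
   Context: Cyclic polynomial channel model of the $3$-user $X$-network. Fix $n\in\mathbb{N}$; all congruences are taken modulo $x^n-1$, so $x^a\equiv x^b$ iff $a\equiv b \pmod n$. Let $\mathcal{K}=\{1,2,3\}$. $\mathrm{Tx}_i$ holds one message $W_{ji}$ for each receiver $\mathrm{Rx}_j$, messages lying in an abelian group (binary strings of length $t$). $\mathrm{Tx}_i$ chooses offsets $p_{ji}\in\{0,\dots,n-1\}$ and transmits $u_i(x)\equiv\sum_jW_{ji}x^{p_{ji}}$. Channel matrix $\boldsymbol{D}=(d_{ji})$ of monomials $x^k$, known to all. $\mathrm{Rx}_j$ observes $r_j(x)\equiv\sum_i d_{ji}u_i(x)$; the coefficient at $x^m$ is the sum of messages arriving at offset $m$. At $\mathrm{Rx}_a$ dedicated signals are $d_{al}x^{p_{al}}$ and interfering signals are $d_{al}x^{p_{bl}}$, $b\ne a$. Separability conditions: (S1) for each $i$, $x^{p_{1i}},x^{p_{2i}},x^{p_{3i}}$ pairwise incongruent; (S2) dedicated signals at each receiver pairwise incongruent; (S3) every dedicated signal at $\mathrm{Rx}_a$ incongruent to every interfering signal at $\mathrm{Rx}_a$. A receiver decodes a message if it appears alone at some offset, possibly after subtracting messages it already knows. Degrees of freedom $=M/n$, $M$ the number of messages obtained by their intended receivers. Receiver backhaul network: interference-free links between receivers, each carrying one message-sized group element; $\Theta_{\mathrm{R}}$ is the total number of such elements exchanged. Alignment scheme for fixed pairwise distinct $i,j,k$: (A1) $d_{ii}x^{p_{ji}}\equiv d_{ij}x^{p_{kj}}\equiv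 d_{ik}x^{p_{jk}}$; (A2) $d_{ii}x^{p_{ki}}\equiv d_{ij}x^{p_{jj}}\equiv d_{ik}x^{p_{kk}}$; (A3) $d_{ji}x^{p_{ki}}\equiv d_{jj}x^{p_{kj}}\equiv d_{jk}x^{p_{ik}}$; (A4) $d_{ji}x^{p_{ii}}\equiv d_{jk}x^{p_{kk}}$; (A5) $d_{jj}x^{p_{ij}}\equiv d_{jk}x^{p_{jk}}$; (A6) $d_{ki}x^{p_{ii}}\equiv d_{kj}x^{p_{jj}}\equiv d_{kk}x^{p_{ik}}$; (A7) $d_{kj}x^{p_{ij}}\equiv d_{ki}x^{p_{ji}}$; (A8) $d_{ki}x^{p_{ki}}\equiv d_{kk}x^{p_{jk}}$. (A5) and (A8) are the two exempted collisions (dedicated $W_{jk}$ with interfering $W_{ij}$ at $\mathrm{Rx}_j$; dedicated $W_{ki}$ with interfering $W_{jk}$ at $\mathrm{Rx}_k$). Conditions on $\boldsymbol{D}$: (i) $d_{ij}d_{ki}d_{jk}\equiv d_{ji}d_{ik}d_{kj}$; (ii) $d_{ii}d_{jk}d_{kj}\equiv d_{jj}d_{ik}d_{ki}\equiv d_{kk}d_{ij}d_{ji}$; (iii) $d_{ii}d_{kk}\not\equiv d_{ik}d_{ki}$; (iv) $d_{ii}d_{jj}\not\equiv d_{ij}d_{ji}$; (v) $d_{ii}d_{jk}\not\equiv d_{ik}d_{ji}$; (vi) $d_{ij}d_{jk}\not\equiv d_{ik}d_{jj}$; (vii) $d_{kk}d_{ji}\not\equiv d_{ki}d_{jk}$;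 (viii) $d_{kk}d_{jj}\not\equiv d_{kj}d_{jk}$; (ix) $d_{ii}d_{jj}d_{kk}\not\equiv d_{ij}d_{jk}d_{ki}\equiv d_{ji}d_{kj}d_{ik}$; (x) $d_{kk}d_{ii}d_{jj}d_{kk}\not\equiv d_{jk}d_{kj}d_{ik}d_{ki}$, $d_{ii}d_{ii}d_{jj}d_{kk}\not\equiv d_{ij}d_{ji}d_{ik}d_{ki}$, $d_{jj}d_{ii}d_{jj}d_{kk}\not\equiv d_{ij}d_{ji}d_{jk}d_{kj}$. Under (i)–(x), offsets satisfying (A1)–(A8) and all separability conditions except the two exempted collisions exist. *)

theory Defs
  imports Complex_Main "HOL-Number_Theory.Cong"
begin

(* Cyclic polynomial model of the 3-user X-network, everything modulo x^n - 1.
   A monomial x^e is represented by its exponent e; x^a == x^b  iff  [a = b] (mod n).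
   d r t  : exponent of the channel coefficient d_{rt}  (receiver r, transmitter t)
   p r t  : offset p_{rt} used by Tx_t for its message W_{rt} intended for Rx_r
   A message W_{rt} is represented by the pair (r, t). *)

definition K3 :: "nat set" where
  "K3 = {1, 2, 3}"

definition Msgs :: "(nat \<times> nat) set" where
  "Msgs = K3 \<times> K3"

definition arrival :: "nat \<Rightarrow> (nat \<Rightarrow> nat \<Rightarrow> nat) \<Rightarrow> (nat \<Rightarrow> nat \<Rightarrow> nat) \<Rightarrow> nat \<Rightarrow> nat \<times> nat \<Rightarrow> nat" where
  "arrival n d p a w = (d a (snd w) + p (fst w) (snd w)) mod n"

text \<open>Decoding at Rx_a starting from a set S of already known messages: a message is decoded
  if it appears alone at its offset after subtracting known (or already decoded) messages.\<close>
inductive decodes :: "nat \<Rightarrow> (nat \<Rightarrow> nat \<Rightarrow> nat) \<Rightarrow> (nat \<Rightarrow> nat \<Rightarrow> nat) \<Rightarrow> nat \<Rightarrow> (nat \<times> nat) set \<Rightarrow> nat \<times> nat \<Rightarrow> bool"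
  for n d p a S where
  known: "w \<in> S \<Longrightarrow> decodes n d p a S w"
| alone: "w \<in> Msgs \<Longrightarrow>
          (\<forall>w'\<in>Msgs. w' \<noteq> w \<and> arrival n d p a w' = arrival n d p a w \<longrightarrow> decodes n d p a S w') \<Longrightarrow>
          decodes n d p a S w"

definition init_know :: "nat \<Rightarrow> (nat \<Rightarrow> nat \<Rightarrow> nat) \<Rightarrow> (nat \<Rightarrow> nat \<Rightarrow> nat) \<Rightarrow> nat \<Rightarrow> (nat \<times> nat) set" where
  "init_know n d p = (\<lambda>a. Collect (decodes n d p a {}))"

text \<open>Receiver backhaul: a list of exchanges (s, t, w): Rx_s sends the (known) message w to Rx_t,
  which then re-decodes with w as side information. Exchanges happen in order; None if invalid.\<close>
fun run_backhaul :: "nat \<Rightarrow> (nat \<Rightarrow> nat \<Rightarrow> nat) \<Rightarrow> (nat \<Rightarrow> nat \<Rightarrow> nat) \<Rightarrow> (nat \<Rightarrow> (nat \<times> nat) set)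
    \<Rightarrow> (nat \<times> nat \<times> (nat \<times> nat)) list \<Rightarrow> (nat \<Rightarrow> (nat \<times> nat) set) option" where
  "run_backhaul n d p kn [] = Some kn"
| "run_backhaul n d p kn ((s, t, w) # es) =
     (if s \<in> K3 \<and> t \<in> K3 \<and> s \<noteq> t \<and> w \<in> kn s
      then run_backhaul n d p (kn(t := Collect (decodes n d p t (kn t \<union> {w})))) es
      else None)"

text \<open>Total number of group elements exchanged over the receiver backhaul.\<close>
definition theta_R :: "(nat \<times> nat \<times> (nat \<times> nat)) list \<Rightarrow> nat" where
  "theta_R es = length es"

definition num_decoded :: "(nat \<Rightarrow> (nat \<times> nat) set) \<Rightarrow> nat" where
  "num_decoded kn = card {w \<in> Msgs. w \<in> kn (fst w)}"

definition dof :: "nat \<Rightarrow> (nat \<Rightarrow> (nat \<times> nat) set) \<Rightarrow> real" where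
  "dof n kn = real (num_decoded kn) / real n"

definition valid_offsets :: "nat \<Rightarrow> (nat \<Rightarrow> nat \<Rightarrow> nat) \<Rightarrow> bool" where
  "valid_offsets n p \<longleftrightarrow> (\<forall>r\<in>K3. \<forall>t\<in>K3. p r t < n)"

definition D_conditions :: "nat \<Rightarrow> (nat \<Rightarrow> nat \<Rightarrow> nat) \<Rightarrow> nat \<Rightarrow> nat \<Rightarrow> nat \<Rightarrow> bool" where
  "D_conditions n d i j k \<longleftrightarrow>
     [d i j + d k i + d j k = d j i + d i k + d k j] (mod n) \<and>
     [d i i + d j k + d k j = d j j + d i k + d k i] (mod n) \<and>
     [d j j + d i k + d k i = d k k + d i j + d j i] (mod n) \<and>
     \<not> [d i i + d k k = d i k + d k i] (mod n) \<and>
     \<not> [d i i + d j j = d i j + d j i] (mod n) \<and>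
     \<not> [d i i + d j k = d i k + d j i] (mod n) \<and>
     \<not> [d i j + d j k = d i k + d j j] (mod n) \<and>
     \<not> [d k k + d j i = d k i + d j k] (mod n) \<and>
     \<not> [d k k + d j j = d k j + d j k] (mod n) \<and>
     \<not> [d i i + d j j + d k k = d i j + d j k + d k i] (mod n) \<and>
     [d i j + d j k + d k i = d j i + d k j + d i k] (mod n) \<and>
     \<not> [d k k + d i i + d j j + d k k = d j k + d k j + d i k + d k i] (mod n) \<and>
     \<not> [d i i + d i i + d j j + d k k = d i j + d j i + d i k + d k i] (mod n) \<and>
     \<not> [d j j + d i i + d j j + d k k = d i j + d j i + d j k + d k j] (mod n)"

definition alignment :: "nat \<Rightarrow> (nat \<Rightarrow> nat \<Rightarrow> nat) \<Rightarrow> (nat \<Rightarrow> nat \<Rightarrow> nat) \<Rightarrow> nat \<Rightarrow> nat \<Rightarrow> nat \<Rightarrow> bool" where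
  "alignment n d p i j k \<longleftrightarrow>
     [d i i + p j i = d i j + p k j] (mod n) \<and> [d i j + p k j = d i k + p j k] (mod n) \<and>
     [d i i + p k i = d i j + p j j] (mod n) \<and> [d i j + p j j = d i k + p k k] (mod n) \<and>
     [d j i + p k i = d j j + p k j] (mod n) \<and> [d j j + p k j = d j k + p i k] (mod n) \<and>
     [d j i + p i i = d j k + p k k] (mod n) \<and>
     [d j j + p i j = d j k + p j k] (mod n) \<and>
     [d k i + p i i = d k j + p j j] (mod n) \<and> [d k j + p j j = d k k + p i k] (mod n) \<and>
     [d k j + p i j = d k i + p j i] (mod n) \<and>
     [d k i + p k i = d k k + p j k] (mod n)"

text \<open>Exempted collisions: dedicated W_{jk} with interfering W_{ij} at Rx_j, and
  dedicated W_{ki} with interfering W_{jk} at Rx_k.  exempt i j k a l b l' refers to the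
  dedicated signal d_{al} x^{p_{al}} and the interfering signal d_{al'} x^{p_{bl'}} at Rx_a.\<close>
definition exempt :: "nat \<Rightarrow> nat \<Rightarrow> nat \<Rightarrow> nat \<Rightarrow> nat \<Rightarrow> nat \<Rightarrow> nat \<Rightarrow> bool" where
  "exempt i j k a l b l' \<longleftrightarrow>
     (a = j \<and> l = k \<and> b = i \<and> l' = j) \<or> (a = k \<and> l = i \<and> b = j \<and> l' = k)"

definition separable_except :: "nat \<Rightarrow> (nat \<Rightarrow> nat \<Rightarrow> nat) \<Rightarrow> (nat \<Rightarrow> nat \<Rightarrow> nat) \<Rightarrow> nat \<Rightarrow> nat \<Rightarrow> nat \<Rightarrow> bool" where
  "separable_except n d p i j k \<longleftrightarrow>
     (\<forall>t\<in>K3. \<forall>a\<in>K3. \<forall>b\<in>K3. a \<noteq> b \<longrightarrow> \<not> [p a t = p b t] (mod n)) \<and>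
     (\<forall>a\<in>K3. \<forall>l\<in>K3. \<forall>l'\<in>K3. l \<noteq> l' \<longrightarrow> \<not> [d a l + p a l = d a l' + p a l'] (mod n)) \<and>
     (\<forall>a\<in>K3. \<forall>l\<in>K3. \<forall>b\<in>K3. \<forall>l'\<in>K3. b \<noteq> a \<longrightarrow> \<not> exempt i j k a l b l' \<longrightarrow>
        \<not> [d a l + p a l = d a l' + p b l'] (mod n))"

definition protocol :: "nat \<Rightarrow> nat \<Rightarrow> nat \<Rightarrow> (nat \<times> nat \<times> (nat \<times> nat)) list" where
  "protocol i j k = [(i, j, (i, j)), (j, k, (j, k))]"

end

theory Submission imports Defs begin

abbreviation cg :: "int \<Rightarrow> int \<Rightarrow> bool" where "cg x y \<equiv> (5::int) dvd (x - y)"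

lemma cg_shift[simp]: "cg (x + e) (y + e) \<longleftrightarrow> cg x y" by simp
lemma cg_sym: "cg x y \<longleftrightarrow> cg y x" by (metis dvd_diff_commute)

lemma pig:
  fixes x1 x2 x3 x4 x5 y :: int
  assumes "\<not> cg x1 x2" "\<not> cg x1 x3" "\<not> cg x1 x4" "\<not> cg x1 x5"
    "\<not> cg x2 x3" "\<not> cg x2 x4" "\<not> cg x2 x5"
    "\<not> cg x3 x4" "\<not> cg x3 x5" "\<not> cg x4 x5"
    "\<not> cg y x1" "\<not> cg y x2" "\<not> cg y x3"
  shows "cg y x4 \<or> cg y x5"
proof -
  have e: "\<And>a b::int. cg a b \<longleftrightarrow> a mod 5 = b mod 5" by (simp add: mod_eq_dvd_iff)
  have n: "x1 mod 5 \<noteq> x2 mod 5" "x1 mod 5 \<noteq> x3 mod 5" "x1 mod 5 \<noteq> x4 mod 5" "x1 mod 5 \<noteq> x5 mod 5"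
    "x2 mod 5 \<noteq> x3 mod 5" "x2 mod 5 \<noteq> x4 mod 5" "x2 mod 5 \<noteq> x5 mod 5"
    "x3 mod 5 \<noteq> x4 mod 5" "x3 mod 5 \<noteq> x5 mod 5" "x4 mod 5 \<noteq> x5 mod 5"
    "y mod 5 \<noteq> x1 mod 5" "y mod 5 \<noteq> x2 mod 5" "y mod 5 \<noteq> x3 mod 5"
    using assms unfolding e by blast+
  define R where "R = {x1 mod 5, x2 mod 5, x3 mod 5, x4 mod 5, x5 mod 5}"
  have sub: "R \<subseteq> {0..<5}" unfolding R_def by auto
  have c: "card R = 5" unfolding R_def using n(1-10) by (simp del: mod_eq_dvd_iff)
  have "R = {0..<5}" using card_subset_eq[OF _ sub] c by simp
  moreover have "y mod 5 \<in> {0..<5}" by simp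
  ultimately have "y mod 5 \<in> R" by simp
  then have "y mod 5 = x4 mod 5 \<or> y mod 5 = x5 mod 5" using n(11-13) unfolding R_def by blast
  then show ?thesis unfolding e .
qed

lemma final:
  fixes q c f a bn :: int
  assumes "(5::int) dvd (bn + f - (q - c)) \<or> (5::int) dvd (bn + f - q)"
   "(5::int) dvd (a + f - (q - c)) \<or> (5::int) dvd (a + f - q)"
   "\<not> (5::int) dvd (q + f - a)" "\<not> (5::int) dvd (q + f - (a - c))"
   "\<not> (5::int) dvd (bn - a)"
   "(5::int) dvd (q + 2*c - bn) \<or> (5::int) dvd (q + 2*c - a)"
   "(5::int) dvd (q - 2*c - bn) \<or> (5::int) dvd (q - 2*c - a)"
   "\<not> (5::int) dvd c"
  shows False
  using assms by presburger

lemma core: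
  fixes A B Q E :: "nat \<Rightarrow> int"
  assumes h1: "\<forall>l\<in>K3. \<forall>m\<in>K3. l \<noteq> m \<longrightarrow> \<not> cg (B l) (B m)"
    and h2: "\<forall>l\<in>K3. \<forall>m\<in>K3. \<not> cg (B l) (A m)"
    and h3: "\<forall>l\<in>K3. \<forall>m\<in>K3. \<not> cg (B l) (Q m)"
    and h4: "\<forall>l\<in>K3. \<forall>m\<in>K3. l \<noteq> m \<longrightarrow> \<not> cg (A l + E l) (A m + E m)"
    and h5: "\<forall>l\<in>K3. \<forall>m\<in>K3. \<not> cg (A l + E l) (B m + E m)"
    and h6: "\<forall>l\<in>K3. \<forall>m\<in>K3. \<not> cg (A l + E l) (Q m + E m)"
  shows False
proof -
  have K: "K3 = {1,2,3}" by (simp add: K3_def)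
  have AQ: "\<not> cg (A l) (Q l)" if "l \<in> K3" for l using h6 that by force
  have P1: "cg (A m) (A l) \<or> cg (A m) (Q l)" "cg (Q m) (A l) \<or> cg (Q m) (Q l)"
    if "l \<in> K3" "m \<in> K3" for l m
  proof -
    have 1: "\<not> cg (B 1) (B 2)" "\<not> cg (B 1) (B 3)" "\<not> cg (B 2) (B 3)" using h1 by (auto simp: K)
    have 2: "\<not> cg (B x) (A l)" "\<not> cg (B x) (Q l)" "\<not> cg (A m) (B x)" "\<not> cg (Q m) (B x)" if "x \<in> K3" for x
      using h2 h3 that \<open>l \<in> K3\<close> \<open>m \<in> K3\<close> cg_sym by blast+
    have 3: "\<not> cg (A l) (Q l)" using AQ that by blast
    have k: "1 \<in> K3" "2 \<in> K3" "3 \<in> K3" by (simp_all add: K)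
    note a = 2[OF k(1)] 2[OF k(2)] 2[OF k(3)]
    show "cg (A m) (A l) \<or> cg (A m) (Q l)"
      by (rule pig[of "B 1" "B 2" "B 3" "A l" "Q l"]) (fact 1 a 3)+
    show "cg (Q m) (A l) \<or> cg (Q m) (Q l)"
      by (rule pig[of "B 1" "B 2" "B 3" "A l" "Q l"]) (fact 1 a 3)+
  qed
  have P2: "cg (B m + E m) (B l + E l) \<or> cg (B m + E m) (Q l + E l)"
      "cg (Q m + E m) (B l + E l) \<or> cg (Q m + E m) (Q l + E l)"
    if "l \<in> K3" "m \<in> K3" for l m
  proof -
    have k: "1 \<in> K3" "2 \<in> K3" "3 \<in> K3" by (simp_all add: K)
    have 1: "\<not> cg (A 1 + E 1) (A 2 + E 2)" "\<not> cg (A 1 + E 1) (A 3 + E 3)" "\<not> cg (A 2 + E 2) (A 3 + E 3)"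
      using h4 k by auto
    have 2: "\<not> cg (A x + E x) (B l + E l)" "\<not> cg (A x + E x) (Q l + E l)"
      "\<not> cg (B m + E m) (A x + E x)" "\<not> cg (Q m + E m) (A x + E x)" if "x \<in> K3" for x
      using h5 h6 that \<open>l \<in> K3\<close> \<open>m \<in> K3\<close> cg_sym by blast+
    have 3: "\<not> cg (B l + E l) (Q l + E l)" using h3 that by simp
    note a = 2[OF k(1)] 2[OF k(2)] 2[OF k(3)]
    show "cg (B m + E m) (B l + E l) \<or> cg (B m + E m) (Q l + E l)"
      by (rule pig[of "A 1 + E 1" "A 2 + E 2" "A 3 + E 3" "B l + E l" "Q l + E l"]) (fact 1 a 3)+
    show "cg (Q m + E m) (B l + E l) \<or> cg (Q m + E m) (Q l + E l)"
      by (rule pig[of "A 1 + E 1" "A 2 + E 2" "A 3 + E 3" "B l + E l" "Q l + E l"]) (fact 1 a 3)+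
  qed
  have pair: "cg (Q l) (Q m) \<and> cg (Q m + E m) (B l + E l) \<and> cg (B m + E m) (Q l + E l) \<and> \<not> cg (E l) (E m)"
    if lm: "l \<in> K3" "m \<in> K3" "l \<noteq> m" and a: "cg (A l) (A m)" for l m
  proof -
    have e: "\<not> cg (E l) (E m)" using h4 lm a by (metis cg_shift dvd_add dvd_diff_commute add_diff_add diff_add_cancel)
    have q: "cg (Q l) (Q m)"
    proof -
      have "cg (Q m) (A l) \<or> cg (Q m) (Q l)" using P1(2)[OF lm(1,2)] .
      moreover have "\<not> cg (A m) (Q m)" using AQ lm by blast
      ultimately show ?thesis using a by presburger
    qed
    have 1: "cg (Q m + E m) (B l + E l)"
    proof -
      have "cg (Q m + E m) (B l + E l) \<or> cg (Q m + E m) (Q l + E l)" using P2(2)[OF lm(1,2)] .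
      then show ?thesis using q e by presburger
    qed
    have 2: "cg (B m + E m) (Q l + E l)"
    proof -
      have "cg (B m + E m) (B l + E l) \<or> cg (B m + E m) (Q l + E l)" using P2(1)[OF lm(1,2)] .
      moreover have "\<not> cg (B m) (Q m)" using h3 lm by blast
      ultimately show ?thesis using 1 by presburger
    qed
    show ?thesis using q 1 2 e by blast
  qed
  have caseB: False
    if lmn: "l \<in> K3" "m \<in> K3" "n \<in> K3" "l \<noteq> m" "l \<noteq> n" "m \<noteq> n"
      and a: "cg (A l) (A m)" "\<not> cg (A n) (A l)" for l m n
  proof -
    have an: "cg (A n) (Q l)" using P1(1)[OF lmn(1,3)] a(2) by blast
    have qn: "cg (Q n) (A l)"
    proof -
      have "cg (Q n) (A l) \<or> cg (Q n) (Q l)" using P1(2)[OF lmn(1,3)] .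
      moreover have "\<not> cg (A n) (Q n)" using AQ lmn by blast
      ultimately show ?thesis using an by presburger
    qed
    have pr: "cg (Q l) (Q m)" "cg (Q m + E m) (B l + E l)" "cg (B m + E m) (Q l + E l)" "\<not> cg (E l) (E m)"
      using pair[OF lmn(1,2,4) a(1)] by blast+
    have d: "\<not> cg (B l) (B m)" "\<not> cg (B l) (Q l)" "\<not> cg (B l) (B n)" "\<not> cg (B l) (A l)"
      "\<not> cg (B m) (Q l)" "\<not> cg (B m) (B n)" "\<not> cg (B m) (A l)"
      "\<not> cg (Q l) (B n)" "\<not> cg (Q l) (A l)" "\<not> cg (B n) (A l)"
      using h1 h2 h3 AQ lmn by (auto simp: dvd_diff_commute[of 5 "Q l"])
    obtain c where c: "c = E l - E m" by blast
    obtain f where f: "f = E n - E l" by blast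
    have nc: "\<not> (5::int) dvd c" using pr(4) c by simp
    have fbl: "cg (B l) (Q l - c)" using pr(1,2) c by presburger
    have fbm: "cg (B m) (Q l + c)" using pr(3) c by presburger
    have v: "cg (Q l + 2 * c) (B n) \<or> cg (Q l + 2 * c) (A l)"
    proof (rule pig[OF d])
      show "\<not> cg (Q l + 2 * c) (B l)" using fbl nc by presburger
      show "\<not> cg (Q l + 2 * c) (B m)" using fbm nc by presburger
      show "\<not> cg (Q l + 2 * c) (Q l)" using nc by presburger
    qed
    have w: "cg (Q l - 2 * c) (B n) \<or> cg (Q l - 2 * c) (A l)"
    proof (rule pig[OF d])
      show "\<not> cg (Q l - 2 * c) (B l)" using fbl nc by presburger
      show "\<not> cg (Q l - 2 * c) (B m)" using fbm nc by presburger
      show "\<not> cg (Q l - 2 * c) (Q l)" using nc by presburger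
    qed
    have p1: "cg (B n + E n) (B l + E l) \<or> cg (B n + E n) (Q l + E l)" using P2(1)[OF lmn(1,3)] .
    have p2: "cg (Q n + E n) (B l + E l) \<or> cg (Q n + E n) (Q l + E l)" using P2(2)[OF lmn(1,3)] .
    have bq: "\<not> cg (B n) (Q n)" using h3 lmn by blast
    have h4a: "\<not> cg (A n + E n) (A l + E l)" "\<not> cg (A n + E n) (A m + E m)"
      using h4[rule_format, OF lmn(3) lmn(1) lmn(5)[symmetric]] h4[rule_format, OF lmn(3) lmn(2) lmn(6)[symmetric]] by blast+
    have f1: "cg (B n + f) (Q l - c) \<or> cg (B n + f) (Q l)" using p1 fbl f by presburger
    have f2: "cg (A l + f) (Q l - c) \<or> cg (A l + f) (Q l)" using p2 fbl f qn by presburger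
    have f3: "\<not> cg (Q l + f) (A l)" using h4a(1) an f by presburger
    have f4: "\<not> cg (Q l + f) (A l - c)" using h4a(2) an f c a(1) by presburger
    have f5: "\<not> cg (B n) (A l)" using bq qn by presburger
    show False using final[OF f1 f2 f3 f4 f5 v w nc] .
  qed
  have k: "1 \<in> K3" "2 \<in> K3" "3 \<in> K3" by (simp_all add: K)
  have aq1: "\<not> cg (A 1) (Q 1)" using AQ k(1) .
  have c2: "cg (A 2) (A 1) \<or> cg (A 2) (Q 1)" using P1(1)[OF k(1) k(2)] .
  have c3: "cg (A 3) (A 1) \<or> cg (A 3) (Q 1)" using P1(1)[OF k(1) k(3)] .
  show False
  proof (cases "cg (A 2) (A 1)")
    case T2: True
    show ?thesis
    proof (cases "cg (A 3) (A 1)")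
      case T3: True
      have a12: "cg (A 1) (A 2)" using T2 by presburger
      have a13: "cg (A 1) (A 3)" using T3 by presburger
      have p12: "cg (Q 1) (Q 2)" "cg (Q 2 + E 2) (B 1 + E 1)" using pair[OF k(1) k(2) _ a12] by simp_all
      have p13: "cg (Q 1) (Q 3)" "cg (Q 3 + E 3) (B 1 + E 1)" using pair[OF k(1) k(3) _ a13] by simp_all
      have s1: "cg (Q 2 + E 2) (Q 3 + E 3)" using p12(2) p13(2) by presburger
      have s2: "cg (Q 2) (Q 3)" using p12(1) p13(1) by presburger
      have s3: "cg (E 2) (E 3)" using s1 s2 by presburger
      have s4: "cg (A 2) (A 3)" using T2 T3 by presburger
      have s5: "cg (A 2 + E 2) (A 3 + E 3)" using s3 s4 by presburger
      moreover have "\<not> cg (A 2 + E 2) (A 3 + E 3)" using h4 k by simp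
      ultimately show False by blast
    next
      case F3: False
      have a12: "cg (A 1) (A 2)" using T2 by presburger
      have "\<not> cg (A 3) (A 1)" using F3 .
      then show False using caseB[OF k(1) k(2) k(3) _ _ _ a12] by simp
    qed
  next
    case F2: False
    then have t2: "cg (A 2) (Q 1)" using c2 by blast
    show ?thesis
    proof (cases "cg (A 3) (A 1)")
      case T3: True
      have a13: "cg (A 1) (A 3)" using T3 by presburger
      have "\<not> cg (A 2) (A 1)" using F2 .
      then show False using caseB[OF k(1) k(3) k(2) _ _ _ a13] by simp
    next
      case F3: False
      then have t3: "cg (A 3) (Q 1)" using c3 by blast
      have a23: "cg (A 2) (A 3)" using t2 t3 by presburger
      have "\<not> cg (A 1) (A 2)" using F2 by presburger
      then show False using caseB[OF k(2) k(3) k(1) _ _ _ a23] by simp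
    qed
  qed
qed

lemma dec_empty:
  assumes "decodes n d p a S w" "S = {}"
  shows "w \<in> Msgs \<and> (\<forall>w'\<in>Msgs. w' \<noteq> w \<longrightarrow> arrival n d p a w' \<noteq> arrival n d p a w)"
  using assms
proof (induction rule: decodes.induct)
  case (known w) then show ?case by simp
next
  case (alone w)
  show ?case
  proof (intro conjI ballI impI)
    show "w \<in> Msgs" by fact
    fix w' assume w': "w' \<in> Msgs" "w' \<noteq> w"
    show "arrival n d p a w' \<noteq> arrival n d p a w"
    proof
      assume eq: "arrival n d p a w' = arrival n d p a w"
      then have "\<forall>w''\<in>Msgs. w'' \<noteq> w' \<longrightarrow> arrival n d p a w'' \<noteq> arrival n d p a w'"
        using alone.IH w' alone.prems by blast
      then show False using alone.hyps(1) w' eq by metis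
    qed
  qed
qed

lemma nat_cg: "((x::nat) mod 5 = y mod 5) \<longleftrightarrow> cg (int x) (int y)"
proof -
  have "((x::nat) mod 5 = y mod 5) \<longleftrightarrow> int x mod 5 = int y mod 5"
    by (metis of_nat_eq_iff zmod_int of_nat_numeral)
  also have "\<dots> \<longleftrightarrow> cg (int x) (int y)" by (simp add: mod_eq_dvd_iff)
  finally show ?thesis .
qed

lemma Msgs_mem[simp]: "(b, l) \<in> Msgs \<longleftrightarrow> b \<in> K3 \<and> l \<in> K3" by (simp add: Msgs_def)

lemma two_rx:
  assumes a: "a1 \<in> K3" "a2 \<in> K3" "a1 \<noteq> a2"
    and al1: "\<forall>l\<in>K3. \<forall>w'\<in>Msgs. w' \<noteq> (a1, l) \<longrightarrow> arrival 5 d p a1 w' \<noteq> arrival 5 d p a1 (a1, l)"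
    and al2: "\<forall>l\<in>K3. \<forall>w'\<in>Msgs. w' \<noteq> (a2, l) \<longrightarrow> arrival 5 d p a2 w' \<noteq> arrival 5 d p a2 (a2, l)"
  shows False
proof -
  have "\<exists>a3\<in>K3. a3 \<noteq> a1 \<and> a3 \<noteq> a2" using a unfolding K3_def by (simp; elim disjE; simp)
  then obtain a3 where a3: "a3 \<in> K3" "a3 \<noteq> a1" "a3 \<noteq> a2" by blast
  have ar: "\<And>b r t. arrival 5 d p b (r, t) = (d b t + p r t) mod 5" by (simp add: arrival_def)
  define B where "B l = int (d a1 l + p a1 l)" for l
  define A where "A l = int (d a1 l + p a2 l)" for l
  define Q where "Q l = int (d a1 l + p a3 l)" for l
  define E where "E l = int (d a2 l) - int (d a1 l)" for l
  have AE: "A l + E l = int (d a2 l + p a2 l)" for l by (simp add: A_def E_def)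
  have BE: "B l + E l = int (d a2 l + p a1 l)" for l by (simp add: B_def E_def)
  have QE: "Q l + E l = int (d a2 l + p a3 l)" for l by (simp add: Q_def E_def)
  have X1: "\<not> cg (int (d a1 l + p a1 l)) (int (d a1 m + p b m))"
    if "l \<in> K3" "m \<in> K3" "b \<in> K3" "(b, m) \<noteq> (a1, l)" for l m b
  proof -
    have "arrival 5 d p a1 (b,m) \<noteq> arrival 5 d p a1 (a1,l)" using al1 that by simp
    then have "\<not> cg (int (d a1 m + p b m)) (int (d a1 l + p a1 l))" unfolding ar nat_cg .
    then show ?thesis using cg_sym by blast
  qed
  have X2: "\<not> cg (int (d a2 l + p a2 l)) (int (d a2 m + p b m))"
    if "l \<in> K3" "m \<in> K3" "b \<in> K3" "(b, m) \<noteq> (a2, l)" for l m b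
  proof -
    have "arrival 5 d p a2 (b,m) \<noteq> arrival 5 d p a2 (a2,l)" using al2 that by simp
    then have "\<not> cg (int (d a2 m + p b m)) (int (d a2 l + p a2 l))" unfolding ar nat_cg .
    then show ?thesis using cg_sym by blast
  qed
  show False
  proof (rule core[of B A Q E])
    show "\<forall>l\<in>K3. \<forall>m\<in>K3. l \<noteq> m \<longrightarrow> \<not> cg (B l) (B m)"
      unfolding B_def using X1[of _ _ a1] a(1) by blast
    show "\<forall>l\<in>K3. \<forall>m\<in>K3. \<not> cg (B l) (A m)"
      unfolding B_def A_def using X1[of _ _ a2] a by blast
    show "\<forall>l\<in>K3. \<forall>m\<in>K3. \<not> cg (B l) (Q m)"
      unfolding B_def Q_def using X1[of _ _ a3] a3 by blast
    show "\<forall>l\<in>K3. \<forall>m\<in>K3. l \<noteq> m \<longrightarrow> \<not> cg (A l + E l) (A m + E m)"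
      unfolding AE using X2[of _ _ a2] a by blast
    show "\<forall>l\<in>K3. \<forall>m\<in>K3. \<not> cg (A l + E l) (B m + E m)"
      unfolding AE BE using X2[of _ _ a1] a by blast
    show "\<forall>l\<in>K3. \<forall>m\<in>K3. \<not> cg (A l + E l) (Q m + E m)"
      unfolding AE QE using X2[of _ _ a3] a3 by blast
  qed
qed


lemma ded:
  assumes sep: "separable_except n d p i j k" and al: "a \<in> K3" "l \<in> K3"
    and ex: "\<And>b l'. b \<in> K3 \<Longrightarrow> l' \<in> K3 \<Longrightarrow> b \<noteq> a \<Longrightarrow> exempt i j k a l b l' \<Longrightarrow> (b, l') \<in> S"
  shows "decodes n d p a S (a, l)"
proof (rule decodes.alone)
  show "(a, l) \<in> Msgs" using al by simp
  show "\<forall>w'\<in>Msgs. w' \<noteq> (a, l) \<and> arrival n d p a w' = arrival n d p a (a, l) \<longrightarrow> decodes n d p a S w'"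
  proof (intro ballI impI)
    fix w' assume w': "w' \<in> Msgs" "w' \<noteq> (a, l) \<and> arrival n d p a w' = arrival n d p a (a, l)"
    obtain b l' where bl: "w' = (b, l')" by (cases w')
    have b: "b \<in> K3" "l' \<in> K3" using w'(1) bl by simp_all
    have eq: "[d a l + p a l = d a l' + p b l'] (mod n)"
      using w'(2) bl by (simp add: arrival_def cong_def)
    show "decodes n d p a S w'"
    proof (cases "b = a")
      case True
      then have "l \<noteq> l'" using w'(2) bl by simp
      then show ?thesis using sep al b eq True unfolding separable_except_def by blast
    next
      case False
      show ?thesis
      proof (cases "exempt i j k a l b l'")
        case True
        then show ?thesis using ex[OF b(1) b(2) False] bl decodes.known by simp
      next
        case ne: False
        then show ?thesis using sep al b eq False unfolding separable_except_def by blast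
      qed
    qed
  qed
qed

lemma card_Msgs: "card Msgs = 9"
  by (simp add: Msgs_def K3_def card_cartesian_product)

lemma finite_Msgs: "finite Msgs"
  by (simp add: Msgs_def K3_def)

lemma all_dec:
  assumes "\<forall>w\<in>Msgs. w \<in> kn (fst w)"
  shows "num_decoded kn = 9"
proof -
  have "{w \<in> Msgs. w \<in> kn (fst w)} = Msgs" using assms by blast
  then show ?thesis unfolding num_decoded_def using card_Msgs by simp
qed

lemma dof_9:
  assumes "dof 5 kn = 9 / 5"
  shows "\<forall>w\<in>Msgs. w \<in> kn (fst w)"
proof -
  have "real (num_decoded kn) = 9" using assms unfolding dof_def by simp
  then have n9: "num_decoded kn = 9" by simp
  have sub: "{w \<in> Msgs. w \<in> kn (fst w)} \<subseteq> Msgs" by blast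
  have "{w \<in> Msgs. w \<in> kn (fst w)} = Msgs"
    using card_subset_eq[OF finite_Msgs sub] n9 card_Msgs unfolding num_decoded_def by simp
  then show ?thesis by blast
qed

lemma alone_of:
  assumes "\<forall>w\<in>Msgs. w \<in> kn (fst w)" "kn a = init_know 5 d p a" "a \<in> K3"
  shows "\<forall>l\<in>K3. \<forall>w'\<in>Msgs. w' \<noteq> (a, l) \<longrightarrow> arrival 5 d p a w' \<noteq> arrival 5 d p a (a, l)"
proof (rule ballI)
  fix l assume l: "l \<in> K3"
  have "(a, l) \<in> kn a" using assms(1)[rule_format, of "(a, l)"] assms(3) l by simp
  then have "decodes 5 d p a {} (a, l)" using assms(2) by (simp add: init_know_def)
  then show "\<forall>w'\<in>Msgs. w' \<noteq> (a, l) \<longrightarrow> arrival 5 d p a w' \<noteq> arrival 5 d p a (a, l)"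
    using dec_empty by blast
qed

lemma part2:
  assumes "theta_R es \<le> 1" "run_backhaul 5 d p (init_know 5 d p) es = Some kn"
  shows "dof 5 kn \<noteq> 9 / 5"
proof
  assume "dof 5 kn = 9 / 5"
  then have all: "\<forall>w\<in>Msgs. w \<in> kn (fst w)" by (rule dof_9)
  have "length es \<le> 1" using assms(1) by (simp add: theta_R_def)
  then consider "es = []" | e where "es = [e]" by (cases es) auto
  then obtain a1 a2 where a: "a1 \<in> K3" "a2 \<in> K3" "a1 \<noteq> a2"
    "kn a1 = init_know 5 d p a1" "kn a2 = init_know 5 d p a2"
  proof cases
    case 1
    then have "kn = init_know 5 d p" using assms(2) by simp
    then show ?thesis using that[of 1 2] by (simp add: K3_def)
  next
    case (2 e)
    obtain s t w where e: "e = (s, t, w)" by (cases e)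
    have t: "t \<in> K3" and kn: "kn = (init_know 5 d p)(t := Collect (decodes 5 d p t (init_know 5 d p t \<union> {w})))"
      using assms(2) 2 e by (simp_all split: if_splits)
    have "\<exists>a1\<in>K3. \<exists>a2\<in>K3. a1 \<noteq> a2 \<and> a1 \<noteq> t \<and> a2 \<noteq> t"
      using t unfolding K3_def by (simp; elim disjE; simp)
    then obtain a1 a2 where "a1 \<in> K3" "a2 \<in> K3" "a1 \<noteq> a2" "a1 \<noteq> t" "a2 \<noteq> t" by blast
    then show ?thesis using that[of a1 a2] kn by simp
  qed
  show False
    using two_rx[OF a(1,2,3) alone_of[OF all a(4) a(1)] alone_of[OF all a(5) a(2)]] .
qed


lemma K3_ijk:
  assumes "i \<in> K3" "j \<in> K3" "k \<in> K3" "i \<noteq> j" "j \<noteq> k" "i \<noteq> k" "r \<in> K3"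
  shows "r = i \<or> r = j \<or> r = k"
  using assms unfolding K3_def by (simp; elim disjE; simp)

lemma part1:
  assumes ijk: "i \<in> K3" "j \<in> K3" "k \<in> K3" "i \<noteq> j" "j \<noteq> k" "i \<noteq> k"
    and sep: "separable_except 5 d p i j k"
  shows "\<exists>kn. run_backhaul 5 d p (init_know 5 d p) (protocol i j k) = Some kn \<and>
                  (\<forall>w\<in>Msgs. w \<in> kn (fst w)) \<and> dof 5 kn = 9 / 5 \<and>
                  theta_R (protocol i j k) = 2"
proof -
  define I0 where "I0 = init_know 5 d p"
  define kn1 where "kn1 = I0(j := Collect (decodes 5 d p j (I0 j \<union> {(i, j)})))"
  define kn2 where "kn2 = kn1(k := Collect (decodes 5 d p k (kn1 k \<union> {(j, k)})))"
  have F1: "(i, l) \<in> I0 i" if "l \<in> K3" for l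
  proof -
    have "decodes 5 d p i {} (i, l)"
      by (rule ded[OF sep ijk(1) that]) (use ijk in \<open>auto simp: exempt_def\<close>)
    then show ?thesis by (simp add: I0_def init_know_def)
  qed
  have F2: "(j, l) \<in> kn1 j" if "l \<in> K3" for l
  proof -
    have "decodes 5 d p j (I0 j \<union> {(i, j)}) (j, l)"
      by (rule ded[OF sep ijk(2) that]) (use ijk in \<open>auto simp: exempt_def\<close>)
    then show ?thesis by (simp add: kn1_def)
  qed
  have F3: "(k, l) \<in> kn2 k" if "l \<in> K3" for l
  proof -
    have "decodes 5 d p k (kn1 k \<union> {(j, k)}) (k, l)"
      by (rule ded[OF sep ijk(3) that]) (use ijk in \<open>auto simp: exempt_def\<close>)
    then show ?thesis by (simp add: kn2_def)
  qed
  have run: "run_backhaul 5 d p (init_know 5 d p) (protocol i j k) = Some kn2"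
    using ijk F1[OF ijk(2)] F2[OF ijk(3)]
    by (simp add: protocol_def kn2_def kn1_def I0_def)
  have all: "\<forall>w\<in>Msgs. w \<in> kn2 (fst w)"
  proof
    fix w assume w: "w \<in> Msgs"
    obtain r l where rl: "w = (r, l)" by (cases w)
    have r: "r \<in> K3" and l: "l \<in> K3" using w rl by simp_all
    have "r = i \<or> r = j \<or> r = k" using K3_ijk[OF ijk r] .
    then show "w \<in> kn2 (fst w)"
    proof (elim disjE)
      assume "r = i" then show ?thesis using F1[OF l] rl ijk by (simp add: kn2_def kn1_def)
    next
      assume "r = j" then show ?thesis using F2[OF l] rl ijk by (simp add: kn2_def)
    next
      assume "r = k" then show ?thesis using F3[OF l] rl by simp
    qed
  qed
  have "dof 5 kn2 = 9 / 5" using all_dec[OF all] by (simp add: dof_def)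
  moreover have "theta_R (protocol i j k) = 2" by (simp add: theta_R_def protocol_def)
  ultimately show ?thesis using run all by blast
qed

theorem lemma1:
  fixes d :: "nat \<Rightarrow> nat \<Rightarrow> nat" and i j k :: nat
  assumes "i \<in> K3" and "j \<in> K3" and "k \<in> K3"
    and "i \<noteq> j" and "j \<noteq> k" and "i \<noteq> k"
    and "D_conditions 5 d i j k"
  shows "(\<forall>p. valid_offsets 5 p \<and> alignment 5 d p i j k \<and> separable_except 5 d p i j k \<longrightarrow>
            (\<exists>kn. run_backhaul 5 d p (init_know 5 d p) (protocol i j k) = Some kn \<and>
                  (\<forall>w\<in>Msgs. w \<in> kn (fst w)) \<and> dof 5 kn = 9 / 5 \<and>
                  theta_R (protocol i j k) = 2))
       \<and> (\<forall>p es kn. valid_offsets 5 p \<longrightarrow> theta_R es \<le> 1 \<longrightarrow>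
            run_backhaul 5 d p (init_know 5 d p) es = Some kn \<longrightarrow> dof 5 kn \<noteq> 9 / 5)"
  using part1[OF assms(1-6)] part2 by blast

end
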